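(* Let $f:\mathbb{R}^\ell\times\mathbb{R}^m\to\mathbb{R}^\ell$ be $C^1$, let $\Lambda$ be a parameter shift with limits $\lambda_\pm$, and let $X$ define a stable path with endpoints $X_\pm$. For every sufficiently small $\epsilon>0$ there exists $S>0$ such that if $r>0$ and $N>0$ satisfy $rN>S$, then there is a unique solution $\{x_n\}$ of $x_{n+1}=f(x_n,\Lambda(rn))$ that stays within an $\epsilon$-neighborhood of $X_-$ for all $n\le -N$.
   Context: A parameter shift is a $C^1$ function $\Lambda:\mathbb{R}\to\mathbb{R}^m$ with $\lim_{s\to\pm\infty}\Lambda(s)=\lambda_\pm$ and $\lim_{s\to\pm\infty}\Lambda'(s)=0$. A stable path is given by $X:\mathbb{R}\to\mathbb{R}^\ell$ such that: $X(s)$ is a fixed point of $f(\cdot,\Lambda(s))$ for every $s$; $\{(s,X(s))\}$ is a connected curve; the limits $X_\pm=\lim_{s\to\pm\infty}X(s)$ exist and are fixed points of $f(\cdot,\lambda_\pm)$; and the spectral radius of $D_xf(X(s),\Lambda(s))$ is $<1$ for all $s\in\mathbb{R}\cup\{\pm\infty\}$ (with $X(\pm\infty)=X_\pm$, $\Lambda(\pm\infty)=\lambda_\pm$). A solution is a sequence $\{x_n\}$ satisfying $x_{n+1}=f(x_n,\Lambda(rn))$; $f(\cdot,\lambda)$ need not be invertible. *)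

theory Defs
  imports "HOL-Analysis.Analysis"
begin

definition C1_map :: "('a::euclidean_space \<Rightarrow> 'b::euclidean_space) \<Rightarrow> bool" where
  "C1_map g \<longleftrightarrow> (\<exists>g' :: 'a \<Rightarrow> ('a \<Rightarrow>\<^sub>L 'b).
      (\<forall>z. (g has_derivative blinfun_apply (g' z)) (at z)) \<and> continuous_on UNIV g')"

definition parameter_shift ::
  "(real \<Rightarrow> 'm::euclidean_space) \<Rightarrow> 'm \<Rightarrow> 'm \<Rightarrow> bool" where
  "parameter_shift Lam lm lp \<longleftrightarrow> C1_map Lam \<and>
     (Lam \<longlongrightarrow> lm) at_bot \<and> (Lam \<longlongrightarrow> lp) at_top \<and>
     ((\<lambda>s. vector_derivative Lam (at s)) \<longlongrightarrow> 0) at_bot \<and>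
     ((\<lambda>s. vector_derivative Lam (at s)) \<longlongrightarrow> 0) at_top"

definition complex_eigenvalues :: "real^'n^'n \<Rightarrow> complex set" where
  "complex_eigenvalues A = {\<mu>. \<exists>v :: complex^'n. v \<noteq> 0 \<and>
      (map_matrix complex_of_real A) *v v = \<mu> *s v}"

definition spectral_radius :: "real^'n^'n \<Rightarrow> real" where
  "spectral_radius A = Max (cmod ` complex_eigenvalues A)"

definition Dx :: "((real^'l) \<times> (real^'m) \<Rightarrow> real^'l) \<Rightarrow> real^'l \<Rightarrow> real^'m \<Rightarrow> real^'l^'l" where
  "Dx f x lam = matrix (\<lambda>h. (THE D. (f has_derivative D) (at (x, lam))) (h, 0))"

definition stable_path ::
  "((real^'l) \<times> (real^'m) \<Rightarrow> real^'l) \<Rightarrow> (real \<Rightarrow> real^'m) \<Rightarrow> real^'m \<Rightarrow> real^'m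
    \<Rightarrow> (real \<Rightarrow> real^'l) \<Rightarrow> real^'l \<Rightarrow> real^'l \<Rightarrow> bool" where
  "stable_path f Lam lm lp X Xm Xp \<longleftrightarrow>
     (\<forall>s. f (X s, Lam s) = X s) \<and>
     connected (range (\<lambda>s. (s, X s))) \<and>
     (X \<longlongrightarrow> Xm) at_bot \<and> (X \<longlongrightarrow> Xp) at_top \<and>
     f (Xm, lm) = Xm \<and> f (Xp, lp) = Xp \<and>
     (\<forall>s. spectral_radius (Dx f (X s) (Lam s)) < 1) \<and>
     spectral_radius (Dx f Xm lm) < 1 \<and> spectral_radius (Dx f Xp lp) < 1"

definition is_solution ::
  "((real^'l) \<times> (real^'m) \<Rightarrow> real^'l) \<Rightarrow> (real \<Rightarrow> real^'m) \<Rightarrow> real \<Rightarrow> (int \<Rightarrow> real^'l) \<Rightarrow> bool" where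
  "is_solution f Lam r x \<longleftrightarrow> (\<forall>n::int. x (n + 1) = f (x n, Lam (r * of_int n)))"

end

theory Submission
  imports Defs Jordan_Normal_Form.Spectral_Radius
begin


definition hh :: "nat \<Rightarrow> 'n::finite" where
  "hh = (SOME h. bij_betw h {0..<CARD('n)} UNIV)"

lemma hh_bij: "bij_betw (hh :: nat \<Rightarrow> 'n::finite) {0..<CARD('n)} UNIV"
proof -
  have "\<exists>h::nat \<Rightarrow> 'n. bij_betw h {0..<CARD('n)} UNIV"
    using ex_bij_betw_nat_finite[of "UNIV :: 'n set"] by simp
  then show ?thesis unfolding hh_def by (rule someI_ex)
qed

definition toV :: "'a^'n::finite \<Rightarrow> 'a Matrix.vec" where
  "toV w = Matrix.vec CARD('n) (\<lambda>k. vec_nth w (hh k))"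

definition toM :: "'a^'n^'n::finite \<Rightarrow> 'a Matrix.mat" where
  "toM B = Matrix.mat CARD('n) CARD('n) (\<lambda>(i,j). vec_nth (vec_nth B (hh i)) (hh j))"

lemma toM_carrier: "toM (B :: 'a^'n^'n::finite) \<in> carrier_mat CARD('n) CARD('n)"
  unfolding toM_def by auto

lemma toV_carrier: "toV (w :: 'a^'n::finite) \<in> carrier_vec CARD('n)"
  unfolding toV_def by auto

lemma toV_mult: "toV (B *v w) = toM B *\<^sub>v toV (w :: 'a::comm_semiring_1^'n::finite)"
proof (rule eq_vecI)
  show "dim_vec (toV (B *v w)) = dim_vec (toM B *\<^sub>v toV w)"
    unfolding toV_def toM_def by simp
  fix i assume i: "i < dim_vec (toM B *\<^sub>v toV w)"
  hence i': "i < CARD('n)" unfolding toM_def by simp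
  have "vec_index (toM B *\<^sub>v toV w) i = (\<Sum>k\<in>{0..<CARD('n)}. vec_nth (vec_nth B (hh i)) (hh k) * vec_nth w (hh k))"
    using i' unfolding toM_def toV_def by (simp add: scalar_prod_def)
  also have "\<dots> = (\<Sum>j\<in>UNIV. vec_nth (vec_nth B (hh i)) j * vec_nth w j)"
    using sum.reindex_bij_betw[OF hh_bij, of "\<lambda>j. vec_nth (vec_nth B (hh i)) j * vec_nth w j"] by simp
  also have "\<dots> = vec_index (toV (B *v w)) i"
    using i' unfolding toV_def by (simp add: matrix_vector_mult_def)
  finally show "vec_index (toV (B *v w)) i = vec_index (toM B *\<^sub>v toV w) i" by simp
qed

lemma toV_smult: "toV (c *s w) = c \<cdot>\<^sub>v toV (w :: 'a::comm_semiring_1^'n::finite)"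
  unfolding toV_def by (rule eq_vecI) auto

lemma toV_inj: "toV a = toV b \<Longrightarrow> (a :: 'a^'n::finite) = b"
proof -
  assume h: "toV a = toV b"
  have hb: "bij_betw (hh :: nat \<Rightarrow> 'n) {0..<CARD('n)} UNIV" by (rule hh_bij)
  have "\<forall>j::'n. vec_nth a j = vec_nth b j"
  proof
    fix j :: 'n
    obtain k where k: "k < CARD('n)" "hh k = j"
      using hb unfolding bij_betw_def by (metis UNIV_I atLeastLessThan_iff imageE)
    have "vec_index (toV a) k = vec_index (toV b) k" using h by simp
    thus "vec_nth a j = vec_nth b j" using k unfolding toV_def by simp
  qed
  thus ?thesis by (simp add: Finite_Cartesian_Product.vec_eq_iff)
qed

lemma toV_0: "toV (0 :: 'a::zero^'n::finite) = 0\<^sub>v CARD('n)"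
  unfolding toV_def by (rule eq_vecI) auto

lemma toV_zero_iff: "toV w = 0\<^sub>v CARD('n) \<longleftrightarrow> (w :: 'a::zero^'n::finite) = 0"
  using toV_inj[of w 0] toV_0 by metis

lemma toV_surj: "v \<in> carrier_vec CARD('n) \<Longrightarrow> \<exists>w::'a^'n::finite. v = toV w"
proof -
  assume v: "v \<in> carrier_vec CARD('n)"
  define w :: "'a^'n" where "w = (\<chi> j. vec_index v (the_inv_into {0..<CARD('n)} hh j))"
  have "v = toV w"
  proof (rule eq_vecI)
    fix i assume "i < dim_vec (toV w)"
    hence i: "i < CARD('n)" unfolding toV_def by simp
    have hb: "bij_betw (hh :: nat \<Rightarrow> 'n) {0..<CARD('n)} UNIV" by (rule hh_bij)
    have "the_inv_into {0..<CARD('n)} (hh :: nat \<Rightarrow> 'n) (hh i) = i"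
      using the_inv_into_f_f[of "hh :: nat \<Rightarrow> 'n" "{0..<CARD('n)}" i] hb i unfolding bij_betw_def by simp
    thus "vec_index v i = vec_index (toV w) i" using i unfolding toV_def w_def by simp
  qed (use v in \<open>auto simp: toV_def\<close>)
  thus ?thesis by blast
qed

lemma eig_corr: "(\<mu> \<in> complex_eigenvalues A) \<longleftrightarrow> eigenvalue (toM (map_matrix complex_of_real A)) \<mu>"
  for A :: "real^'n^'n::finite"
proof -
  let ?B = "map_matrix complex_of_real A"
  have "(\<exists>v::complex^'n. v \<noteq> 0 \<and> ?B *v v = \<mu> *s v) \<longleftrightarrow>
        (\<exists>u. u \<in> carrier_vec CARD('n) \<and> u \<noteq> 0\<^sub>v CARD('n) \<and> toM ?B *\<^sub>v u = \<mu> \<cdot>\<^sub>v u)"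
  proof
    assume "\<exists>v::complex^'n. v \<noteq> 0 \<and> ?B *v v = \<mu> *s v"
    then obtain v :: "complex^'n" where v: "v \<noteq> 0" "?B *v v = \<mu> *s v" by blast
    have "toM ?B *\<^sub>v toV v = \<mu> \<cdot>\<^sub>v toV v" using v(2) toV_mult[of ?B v] toV_smult[of \<mu> v] by simp
    thus "\<exists>u. u \<in> carrier_vec CARD('n) \<and> u \<noteq> 0\<^sub>v CARD('n) \<and> toM ?B *\<^sub>v u = \<mu> \<cdot>\<^sub>v u"
      using v(1) toV_zero_iff[of v] toV_carrier[of v] by blast
  next
    assume "\<exists>u. u \<in> carrier_vec CARD('n) \<and> u \<noteq> 0\<^sub>v CARD('n) \<and> toM ?B *\<^sub>v u = \<mu> \<cdot>\<^sub>v u"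
    then obtain u where u: "u \<in> carrier_vec CARD('n)" "u \<noteq> 0\<^sub>v CARD('n)" "toM ?B *\<^sub>v u = \<mu> \<cdot>\<^sub>v u" by blast
    obtain v :: "complex^'n" where uv: "u = toV v" using toV_surj[OF u(1)] by blast
    have "toV (?B *v v) = toV (\<mu> *s v)" using u(3) toV_mult[of ?B v] toV_smult[of \<mu> v] uv by simp
    hence "?B *v v = \<mu> *s v" by (rule toV_inj)
    thus "\<exists>v::complex^'n. v \<noteq> 0 \<and> ?B *v v = \<mu> *s v" using u(2) uv toV_zero_iff by blast
  qed
  moreover have "dim_row (toM ?B) = CARD('n)" unfolding toM_def by simp
  ultimately show ?thesis
    unfolding complex_eigenvalues_def eigenvalue_def eigenvector_def by simp
qed

lemma finite_ceig: "finite (complex_eigenvalues (A :: real^'n^'n::finite))"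
proof -
  have "complex_eigenvalues A = spectrum (toM (map_matrix complex_of_real A))"
    unfolding spectrum_def using eig_corr by blast
  thus ?thesis using card_finite_spectrum(1)[OF toM_carrier] by simp
qed


definition cx :: "real^'n::finite \<Rightarrow> complex^'n" where
  "cx x = (\<chi> i. complex_of_real (vec_nth x i))"

lemma cx_mult: "map_matrix complex_of_real B *v cx x = cx (B *v x)"
  unfolding cx_def map_matrix_def matrix_vector_mult_def
  by (simp add: Finite_Cartesian_Product.vec_eq_iff)

lemma norm_cx: "norm (cx x) = norm x"
  unfolding cx_def norm_vec_def by simp

lemma funpow_cx: "((*v) (map_matrix complex_of_real B) ^^ k) (cx x) = cx (((*v) B ^^ k) x)"
  for B :: "real^'n^'n::finite"
  by (induction k) (auto simp: cx_mult)

lemma funpow_scale: "((*v) (c *\<^sub>R B) ^^ k) x = (c ^ k) *\<^sub>R (((*v) B ^^ k) x)"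
  for B :: "real^'n^'n::finite"
  by (induction k) (auto simp: scaleR_matrix_vector_assoc[symmetric] matrix_scaleR_vector_ac)

lemma toV_funpow:
  fixes B :: "'a::comm_ring_1^'n^'n::finite"
  shows "toV (((*v) B ^^ k) w) = (toM B ^\<^sub>m k) *\<^sub>v toV w"
proof (induction k arbitrary: w)
  case 0
  then show ?case using toM_carrier[of B] toV_carrier[of w] by simp
next
  case (Suc k)
  have "toV (((*v) B ^^ Suc k) w) = toV (((*v) B ^^ k) (B *v w))"
    by (simp only: funpow_Suc_right comp_def)
  also have "\<dots> = (toM B ^\<^sub>m k) *\<^sub>v (toM B *\<^sub>v toV w)" using Suc toV_mult by metis
  also have "\<dots> = (toM B ^\<^sub>m Suc k) *\<^sub>v toV w"
    using assoc_mult_mat_vec[OF pow_carrier_mat[OF toM_carrier[of B]] toM_carrier[of B] toV_carrier[of w]] by simp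
  finally show ?case .
qed

lemma norm_le_sum_cart: "norm (y :: 'a::real_normed_vector^'n::finite) \<le> (\<Sum>i\<in>UNIV. norm (vec_nth y i))"
  unfolding norm_vec_def by (rule L2_set_le_sum) simp

lemma normbound_apply:
  fixes M :: "complex Matrix.mat" and w :: "complex^'n::finite"
  assumes M: "M \<in> carrier_mat CARD('n) CARD('n)" and nb: "norm_bound M c"
    and that: "i0 < CARD('n)"
  shows "norm (vec_index (M *\<^sub>v toV w) i0) \<le> c * CARD('n) * norm w"
proof -
  have "vec_index (M *\<^sub>v toV w) i0 = (\<Sum>j\<in>{0..<CARD('n)}. M $$ (i0, j) * vec_nth w (hh j))"
    using M that unfolding toV_def by (simp add: scalar_prod_def)
  also have "norm \<dots> \<le> (\<Sum>j\<in>{0..<CARD('n)}. c * norm w)"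
  proof (rule sum_norm_le)
    fix j assume j: "j \<in> {0..<CARD('n)}"
    have "norm (M $$ (i0, j)) \<le> c" using nb M that j unfolding norm_bound_def by auto
    moreover have "norm (vec_nth w (hh j)) \<le> norm w" by (rule Finite_Cartesian_Product.norm_nth_le)
    ultimately show "norm (M $$ (i0, j) * vec_nth w (hh j)) \<le> c * norm w"
      by (simp add: norm_mult mult_mono')
  qed
  finally show ?thesis by (simp add: algebra_simps)
qed

lemma power_bound:
  fixes A :: "real^'n^'n::finite"
  assumes sr: "Defs.spectral_radius A < 1"
  shows "\<exists>K \<rho>. 0 < \<rho> \<and> \<rho> < 1 \<and> (\<forall>k x. norm (((*v) A ^^ k) x) \<le> K * \<rho>^k * norm x)"
proof -
  define \<rho>0 where "\<rho>0 = Defs.spectral_radius A"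
  define \<rho> where "\<rho> = (max \<rho>0 0 + 1) / 2"
  have \<rho>pos: "0 < \<rho>" and \<rho>1: "\<rho> < 1" and \<rho>gt: "\<rho>0 < \<rho>"
    using sr unfolding \<rho>_def \<rho>0_def by auto
  define A2 where "A2 = (1 / \<rho>) *\<^sub>R A"
  define Mc where "Mc = toM (map_matrix complex_of_real A2)"
  have Mc: "Mc \<in> carrier_mat CARD('n) CARD('n)" unfolding Mc_def by (rule toM_carrier)
  have eig_small: "cmod \<mu> < 1" if "eigenvalue Mc \<mu>" for \<mu>
  proof -
    have "\<mu> \<in> complex_eigenvalues A2" using eig_corr that unfolding Mc_def by blast
    then obtain v :: "complex^'n" where v: "v \<noteq> 0" "map_matrix complex_of_real A2 *v v = \<mu> *s v"
      unfolding complex_eigenvalues_def by blast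
    have "map_matrix complex_of_real A *v v = complex_of_real \<rho> *s (map_matrix complex_of_real A2 *v v)"
      using \<rho>pos unfolding A2_def map_matrix_def matrix_vector_mult_def
      by (simp add: Finite_Cartesian_Product.vec_eq_iff sum_distrib_left algebra_simps)
    also have "\<dots> = (complex_of_real \<rho> * \<mu>) *s v" using v(2) by (simp add: vector_smult_assoc)
    finally have "complex_of_real \<rho> * \<mu> \<in> complex_eigenvalues A"
      unfolding complex_eigenvalues_def using v(1) by blast
    hence "cmod (complex_of_real \<rho> * \<mu>) \<le> \<rho>0"
      unfolding \<rho>0_def Defs.spectral_radius_def using finite_ceig[of A] by simp
    hence "\<rho> * cmod \<mu> \<le> \<rho>0" using \<rho>pos by (simp add: norm_mult)
    hence "\<rho> * cmod \<mu> < \<rho> * 1" using \<rho>gt by linarith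
    thus ?thesis by (metis mult_less_cancel_left_pos \<rho>pos)
  qed
  have "Spectral_Radius.spectral_radius Mc \<in> norm ` spectrum Mc"
    by (rule spectral_radius_mem_max(1)[OF Mc]) simp
  hence "Spectral_Radius.spectral_radius Mc < 1" using eig_small unfolding spectrum_def by auto
  then obtain c where c: "\<And>k. norm_bound (Mc ^\<^sub>m k) c"
    using spectral_radius_jnf_norm_bound_less_1_upper_triangular[OF Mc] by blast
  define K where "K = c * CARD('n) * CARD('n)"
  have bound: "norm (((*v) A ^^ k) x) \<le> K * \<rho>^k * norm x" for k x
  proof -
    let ?y = "((*v) A2 ^^ k) x"
    let ?w = "((*v) (map_matrix complex_of_real A2) ^^ k) (cx x)"
    have A: "A = \<rho> *\<^sub>R A2" unfolding A2_def using \<rho>pos by simp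
    have 1: "((*v) A ^^ k) x = \<rho>^k *\<^sub>R ?y" unfolding A by (rule funpow_scale)
    have "norm ?y = norm ?w" by (simp add: funpow_cx norm_cx)
    also have "\<dots> \<le> (\<Sum>i\<in>UNIV. norm (vec_nth ?w i))" by (rule norm_le_sum_cart)
    also have "\<dots> = (\<Sum>j\<in>{0..<CARD('n)}. norm (vec_nth ?w (hh j)))"
      using sum.reindex_bij_betw[OF hh_bij, of "\<lambda>i. norm (vec_nth ?w i)"] by simp
    also have "\<dots> = (\<Sum>j\<in>{0..<CARD('n)}. norm (vec_index (toV ?w) j))"
      unfolding toV_def by simp
    also have "\<dots> = (\<Sum>j\<in>{0..<CARD('n)}. norm (vec_index ((Mc ^\<^sub>m k) *\<^sub>v toV (cx x)) j))"
      unfolding Mc_def toV_funpow by simp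
    also have "\<dots> \<le> (\<Sum>j\<in>{0..<CARD('n)}. c * CARD('n) * norm (cx x))"
      by (rule sum_mono, rule normbound_apply) (use Mc c in auto)
    also have "\<dots> = K * norm x" unfolding K_def norm_cx by simp
    finally have "norm ?y \<le> K * norm x" .
    hence "\<rho>^k * norm ?y \<le> \<rho>^k * (K * norm x)" using \<rho>pos by (simp add: mult_left_mono)
    thus ?thesis unfolding 1 using \<rho>pos by (simp add: algebra_simps)
  qed
  show ?thesis using \<rho>pos \<rho>1 bound by blast
qed



lemma funpow_mv_add: "((*v) A ^^ j) (u + v) = ((*v) A ^^ j) u + ((*v) A ^^ j) v"
  for A :: "real^'n^'n::finite"
  by (induction j) (auto simp: matrix_vector_right_distrib)

lemma funpow_mv_neg: "((*v) A ^^ j) (- v) = - ((*v) A ^^ j) v"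
  for A :: "real^'n^'n::finite"
  by (induction j) (auto simp: vec.neg)

lemma adapted_norm:
  fixes A :: "real^'n^'n::finite"
  assumes \<rho>: "0 < \<rho>" "\<rho> < 1" and K: "\<And>k x. norm (((*v) A ^^ k) x) \<le> K * \<rho>^k * norm x"
  shows "\<exists>Nf C \<theta>. 0 \<le> \<theta> \<and> \<theta> < 1 \<and> 0 < C \<and> (\<forall>u v. Nf (u + v) \<le> Nf u + Nf v) \<and>
     (\<forall>v. Nf (- v) = Nf v) \<and> (\<forall>v. norm v \<le> Nf v) \<and> (\<forall>v. Nf v \<le> C * norm v) \<and>
     (\<forall>v. Nf (A *v v) \<le> \<theta> * Nf v)"
proof -
  define \<theta> where "\<theta> = (1 + \<rho>) / 2"
  have \<theta>: "0 < \<theta>" "\<theta> < 1" "\<rho> < \<theta>" using \<rho> unfolding \<theta>_def by auto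
  have "(\<lambda>k. K * (\<rho> / \<theta>) ^ k) \<longlonglongrightarrow> K * 0"
    by (rule tendsto_mult_left, rule LIMSEQ_power_zero) (use \<rho> \<theta> in auto)
  hence "eventually (\<lambda>k. K * (\<rho> / \<theta>) ^ k < 1) sequentially"
    by (intro order_tendstoD(2)) auto
  then obtain k1 where k1: "\<And>k. k \<ge> k1 \<Longrightarrow> K * (\<rho> / \<theta>) ^ k < 1"
    unfolding eventually_sequentially by blast
  define k0 where "k0 = Suc k1"
  have k0: "K * (\<rho> / \<theta>) ^ k0 \<le> 1" using k1[of k0] unfolding k0_def by simp
  define P where "P j v = ((*v) A ^^ j) v" for j v
  define Nf where "Nf v = (\<Sum>j<k0. norm (P j v) / \<theta> ^ j)" for v
  define C where "C = 1 + (\<Sum>j<k0. \<bar>K\<bar> * \<rho> ^ j / \<theta> ^ j)"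
  have "0 \<le> (\<Sum>j<k0. \<bar>K\<bar> * \<rho> ^ j / \<theta> ^ j)"
    by (intro sum_nonneg) (use \<rho> \<theta> in auto)
  hence Cpos: "0 < C" unfolding C_def by simp
  have add: "Nf (u + v) \<le> Nf u + Nf v" for u v
  proof -
    have "Nf (u + v) \<le> (\<Sum>j<k0. (norm (P j u) + norm (P j v)) / \<theta> ^ j)"
      unfolding Nf_def P_def funpow_mv_add
      by (rule sum_mono, rule divide_right_mono) (use \<theta> in \<open>auto intro: norm_triangle_ineq\<close>)
    also have "\<dots> = Nf u + Nf v" unfolding Nf_def by (simp add: add_divide_distrib sum.distrib)
    finally show ?thesis .
  qed
  have neg: "Nf (- v) = Nf v" for v unfolding Nf_def P_def funpow_mv_neg by simp
  have low: "norm v \<le> Nf v" for v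
  proof -
    have "norm (P 0 v) / \<theta> ^ 0 \<le> Nf v" unfolding Nf_def
      by (rule member_le_sum[of 0 "{..<k0}" "\<lambda>j. norm (P j v) / \<theta> ^ j"]) (use \<theta> in \<open>auto simp: k0_def\<close>)
    thus ?thesis unfolding P_def by simp
  qed
  have up: "Nf v \<le> C * norm v" for v
  proof -
    have "Nf v \<le> (\<Sum>j<k0. (\<bar>K\<bar> * \<rho> ^ j / \<theta> ^ j) * norm v)" unfolding Nf_def
    proof (rule sum_mono)
      fix j
      have "norm (P j v) \<le> \<bar>K\<bar> * \<rho>^j * norm v"
      proof -
        have "K * \<rho>^j * norm v \<le> \<bar>K\<bar> * \<rho>^j * norm v"
          by (intro mult_right_mono) (use \<rho> in auto)
        thus ?thesis using K[of j v] unfolding P_def by linarith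
      qed
      thus "norm (P j v) / \<theta> ^ j \<le> (\<bar>K\<bar> * \<rho> ^ j / \<theta> ^ j) * norm v"
        using \<theta> by (simp add: divide_right_mono field_simps)
    qed
    also have "\<dots> = (C - 1) * norm v" unfolding C_def by (simp add: sum_distrib_right)
    also have "\<dots> \<le> C * norm v" by (simp add: algebra_simps)
    finally show ?thesis .
  qed
  have contr: "Nf (A *v v) \<le> \<theta> * Nf v" for v
  proof -
    define g where "g j = norm (P j v) / \<theta> ^ j" for j
    have PA: "P j (A *v v) = P (Suc j) v" for j
      unfolding P_def by (simp only: funpow_Suc_right comp_def)
    have "Nf (A *v v) = (\<Sum>j<k0. \<theta> * g (Suc j))"
      unfolding Nf_def PA g_def using \<theta> by (intro sum.cong) auto
    also have "\<dots> = \<theta> * (\<Sum>j<k0. g (Suc j))" by (simp add: sum_distrib_left)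
    also have "(\<Sum>j<k0. g (Suc j)) = (\<Sum>j<Suc k0. g j) - g 0"
      using sum.lessThan_Suc_shift[of g k0] by linarith
    also have "\<dots> = Nf v + g k0 - g 0" unfolding Nf_def g_def by simp
    also have "\<dots> \<le> Nf v"
    proof -
      have "g k0 \<le> K * \<rho> ^ k0 * norm v / \<theta> ^ k0"
        unfolding g_def P_def using K[of k0 v] \<theta> by (simp add: divide_right_mono)
      also have "\<dots> = (K * (\<rho> / \<theta>) ^ k0) * norm v" by (simp add: power_divide)
      also have "\<dots> \<le> norm v" using mult_right_mono[OF k0 norm_ge_zero[of v]] by simp
      finally show ?thesis unfolding g_def P_def by simp
    qed
    finally show ?thesis using \<theta> by (simp add: mult_left_mono)
  qed
  show ?thesis
    using \<theta> Cpos add neg low up contr by (intro exI[of _ Nf] exI[of _ C] exI[of _ \<theta>]) auto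
qed



fun Qit :: "(int \<Rightarrow> 'a \<Rightarrow> 'a) \<Rightarrow> int \<Rightarrow> nat \<Rightarrow> 'a \<Rightarrow> 'a" where
  "Qit g s 0 x = x"
| "Qit g s (Suc k) x = g (s + int k) (Qit g s k x)"

lemma Qit_shift: "Qit g s (Suc k) x = Qit g (s + 1) k (g s x)"
  by (induction k) (simp_all add: algebra_simps)

lemma pullback:
  fixes g :: "int \<Rightarrow> 'a::banach \<Rightarrow> 'a" and Nf :: "'a \<Rightarrow> real" and E :: "'a set"
  assumes Nadd: "\<And>u v. Nf (u + v) \<le> Nf u + Nf v"
    and Nneg: "\<And>v. Nf (- v) = Nf v"
    and Nlow: "\<And>v. norm v \<le> Nf v"
    and Nup: "\<And>v. Nf v \<le> C * norm v"
    and q: "0 \<le> q" "q < 1"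
    and contr: "\<And>n x y. n \<le> n0 \<Longrightarrow> x \<in> E \<Longrightarrow> y \<in> E \<Longrightarrow> Nf (g n x - g n y) \<le> q * Nf (x - y)"
    and rho: "0 < \<rho>" "cball pp \<rho> \<subseteq> E"
    and Ebd: "E \<subseteq> cball pp R"
    and small: "\<And>n. n \<le> n0 \<Longrightarrow> C * norm (g n pp - pp) \<le> (1 - q) * \<rho>"
    and cont: "\<And>n x. isCont (g n) x"
  shows "\<exists>!x. (\<forall>n. x (n + 1) = g n (x n)) \<and> (\<forall>n \<le> n0 + 1. x n \<in> E)"
proof -
  have Nsub: "Nf (u - w) \<le> Nf (u - v) + Nf (v - w)" for u v w
    using Nadd[of "u - v" "v - w"] by simp
  have Nsym: "Nf (u - v) = Nf (v - u)" for u v using Nneg[of "u - v"] by simp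
  have N0: "Nf 0 = 0" using Nlow[of 0] Nup[of 0] by simp
  define B where "B = {x. Nf (x - pp) \<le> \<rho>}"
  have BE: "x \<in> E" if "x \<in> B" for x
  proof -
    have "dist pp x \<le> \<rho>" using Nlow[of "x - pp"] that unfolding B_def by (simp add: dist_norm norm_minus_commute)
    thus ?thesis using rho by auto
  qed
  have ppB: "pp \<in> B" unfolding B_def using N0 rho by simp
  have step: "g n x \<in> B" if "n \<le> n0" "x \<in> B" for n x
  proof -
    have "Nf (g n x - pp) \<le> Nf (g n x - g n pp) + Nf (g n pp - pp)" by (rule Nsub)
    also have "\<dots> \<le> q * Nf (x - pp) + C * norm (g n pp - pp)"
      using contr[OF that(1) BE[OF that(2)] BE[OF ppB]] Nup by (intro add_mono) auto
    also have "\<dots> \<le> q * \<rho> + (1 - q) * \<rho>"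
      using small[OF that(1)] that(2) q unfolding B_def by (intro add_mono mult_left_mono) auto
    finally show ?thesis unfolding B_def by (simp add: algebra_simps)
  qed
  have QB: "Qit g s k x \<in> B" if "s + int k \<le> n0 + 1" "x \<in> B" for s k x
    using that by (induction k) (auto intro!: step)
  have Qcontr: "Nf (Qit g s k x - Qit g s k y) \<le> q ^ k * Nf (x - y)"
    if "s + int k \<le> n0 + 1" "x \<in> B" "y \<in> B" for s k x y
    using that
  proof (induction k)
    case 0 then show ?case by simp
  next
    case (Suc k)
    have h: "s + int k \<le> n0" using Suc by simp
    have "Nf (Qit g s (Suc k) x - Qit g s (Suc k) y) \<le> q * Nf (Qit g s k x - Qit g s k y)"
      using contr[OF h BE[OF QB] BE[OF QB]] Suc by simp
    also have "\<dots> \<le> q * (q ^ k * Nf (x - y))" using Suc q by (intro mult_left_mono) auto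
    finally show ?case by simp
  qed
  define z where "z m j = Qit g (m - int j) j pp" for m j
  have zB: "z m j \<in> B" if "m \<le> n0 + 1" for m j unfolding z_def using QB ppB that by simp
  have zdiff: "norm (z m (Suc j) - z m j) \<le> \<rho> * q ^ j" if "m \<le> n0 + 1" for m j
  proof -
    have a1: "m - int (Suc j) + 1 = m - int j" by simp
    have a2: "m - int (Suc j) = m - int j - 1" by simp
    have e: "z m (Suc j) = Qit g (m - int j) j (g (m - int j - 1) pp)"
    proof -
      have "z m (Suc j) = Qit g (m - int (Suc j) + 1) j (g (m - int (Suc j)) pp)"
        unfolding z_def by (rule Qit_shift)
      thus ?thesis by (metis a1 a2)
    qed
    have gB: "g (m - int j - 1) pp \<in> B" using step ppB that by simp
    have "norm (z m (Suc j) - z m j) \<le> Nf (z m (Suc j) - z m j)" by (rule Nlow)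
    also have "\<dots> \<le> q ^ j * Nf (g (m - int j - 1) pp - pp)"
    proof -
      have zj: "z m j = Qit g (m - int j) j pp" unfolding z_def ..
      have "m - int j + int j \<le> n0 + 1" using that by simp
      from Qcontr[OF this gB ppB] show ?thesis unfolding e zj .
    qed
    also have "\<dots> \<le> q ^ j * \<rho>" using gB q unfolding B_def by (intro mult_left_mono) auto
    finally show ?thesis by (simp add: mult.commute)
  qed
  define L where "L m = z m 0 + (\<Sum>j. z m (Suc j) - z m j)" for m
  have zlim: "z m \<longlonglongrightarrow> L m" if "m \<le> n0 + 1" for m
  proof -
    have sm: "summable (\<lambda>j. z m (Suc j) - z m j)"
    proof (rule summable_comparison_test)
      show "\<exists>N. \<forall>n\<ge>N. norm (z m (Suc n) - z m n) \<le> \<rho> * q ^ n" using zdiff[OF that] by blast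
      show "summable (\<lambda>n. \<rho> * q ^ n)" using q by (intro summable_mult summable_geometric) auto
    qed
    have lim: "(\<lambda>n. z m 0 + (\<Sum>j<n. z m (Suc j) - z m j)) \<longlonglongrightarrow> L m"
      unfolding L_def by (intro tendsto_add tendsto_const summable_LIMSEQ sm)
    have eq: "(\<lambda>n. z m 0 + (\<Sum>j<n. z m (Suc j) - z m j)) = z m"
      by (rule ext) (simp only: sum_lessThan_telescope, simp)
    show ?thesis using lim unfolding eq .
  qed
  have LE: "L m \<in> E" if "m \<le> n0 + 1" for m
  proof -
    have "(\<lambda>j. norm (z m j - pp)) \<longlonglongrightarrow> norm (L m - pp)"
      by (intro tendsto_norm tendsto_diff zlim[OF that] tendsto_const)
    moreover have "norm (z m j - pp) \<le> \<rho>" for j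
      using Nlow[of "z m j - pp"] zB[OF that, of j] unfolding B_def by simp
    ultimately have "norm (L m - pp) \<le> \<rho>" by (intro LIMSEQ_le_const2) auto
    hence "L m \<in> cball pp \<rho>" by (simp add: dist_norm norm_minus_commute)
    thus ?thesis using rho by auto
  qed
  have Lrec: "L (m + 1) = g m (L m)" if "m \<le> n0" for m
  proof -
    have "z (m + 1) (Suc j) = g m (z m j)" for j
      unfolding z_def by simp
    have "(\<lambda>j. z (m + 1) (Suc j)) \<longlonglongrightarrow> L (m + 1)"
      using zlim[of "m + 1"] that by (intro LIMSEQ_Suc) auto
    moreover have "(\<lambda>j. z (m + 1) (Suc j)) \<longlonglongrightarrow> g m (L m)"
      unfolding \<open>\<And>j. z (m + 1) (Suc j) = g m (z m j)\<close>
      using zlim[of m] that by (intro isCont_tendsto_compose[OF cont]) auto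
    ultimately show ?thesis by (rule LIMSEQ_unique)
  qed
  define x where "x n = (if n \<le> n0 + 1 then L n else Qit g (n0 + 1) (nat (n - n0 - 1)) (L (n0 + 1)))" for n
  have xge: "x n = Qit g (n0 + 1) (nat (n - n0 - 1)) (L (n0 + 1))" if "n \<ge> n0 + 1" for n
    using that unfolding x_def by auto
  have xsol: "x (n + 1) = g n (x n)" for n
  proof (cases "n \<le> n0")
    case True then show ?thesis unfolding x_def using Lrec by simp
  next
    case False
    hence "nat (n + 1 - n0 - 1) = Suc (nat (n - n0 - 1))" by simp
    then show ?thesis using False xge[of n] xge[of "n+1"] by simp
  qed
  have xE: "\<forall>n \<le> n0 + 1. x n \<in> E" unfolding x_def using LE by simp
  have uniq: "y = x" if ysol: "\<forall>n. y (n + 1) = g n (y n)" and yE: "\<forall>n \<le> n0 + 1. y n \<in> E" for y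
  proof -
    have bnd: "Nf (y m - x m) \<le> \<bar>C\<bar> * (2 * R)" if "m \<le> n0 + 1" for m
    proof -
      have "dist pp (y m) \<le> R" "dist pp (x m) \<le> R" using yE xE that Ebd by auto
      hence "norm (y m - pp) \<le> R" "norm (pp - x m) \<le> R" by (auto simp: dist_norm norm_minus_commute)
      moreover have "norm (y m - x m) \<le> norm (y m - pp) + norm (pp - x m)"
        using norm_triangle_ineq[of "y m - pp" "pp - x m"] by simp
      ultimately have "norm (y m - x m) \<le> 2 * R" by simp
      hence "C * norm (y m - x m) \<le> \<bar>C\<bar> * (2 * R)"
        by (smt (verit) abs_ge_self abs_ge_zero mult_left_mono mult_right_mono norm_ge_zero)
      thus ?thesis using Nup[of "y m - x m"] by linarith
    qed
    have iter: "Nf (y m - x m) \<le> q ^ k * Nf (y (m - int k) - x (m - int k))" if "m \<le> n0 + 1" for m k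
    proof (induction k)
      case 0 then show ?case by simp
    next
      case (Suc k)
      let ?n = "m - int k - 1"
      have n: "?n \<le> n0" using that by simp
      have e: "?n + 1 = m - int k" by simp
      have "y ?n \<in> E" "x ?n \<in> E" using yE xE n by auto
      hence "Nf (y (m - int k) - x (m - int k)) \<le> q * Nf (y ?n - x ?n)"
        using contr[OF n] ysol xsol e by metis
      hence "q ^ k * Nf (y (m - int k) - x (m - int k)) \<le> q ^ k * (q * Nf (y ?n - x ?n))"
        using q by (intro mult_left_mono) auto
      then show ?case using Suc by (simp add: algebra_simps)
    qed
    have ybk: "y m = x m" if "m \<le> n0 + 1" for m
    proof -
      have "(\<lambda>k. q ^ k * (\<bar>C\<bar> * (2 * R))) \<longlonglongrightarrow> 0 * (\<bar>C\<bar> * (2 * R))"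
        by (intro tendsto_mult_right LIMSEQ_power_zero) (use q in auto)
      moreover have "Nf (y m - x m) \<le> q ^ k * (\<bar>C\<bar> * (2 * R))" for k
      proof -
        have "Nf (y m - x m) \<le> q ^ k * Nf (y (m - int k) - x (m - int k))" by (rule iter[OF that])
        also have "\<dots> \<le> q ^ k * (\<bar>C\<bar> * (2 * R))" using bnd[of "m - int k"] that q
          by (intro mult_left_mono) auto
        finally show ?thesis .
      qed
      ultimately have "Nf (y m - x m) \<le> 0" by (intro LIMSEQ_le_const) auto
      hence "norm (y m - x m) \<le> 0" using Nlow[of "y m - x m"] by linarith
      thus ?thesis by simp
    qed
    have fwd: "y (n0 + 1 + int k) = x (n0 + 1 + int k)" for k
    proof (induction k)
      case 0 then show ?case using ybk by simp
    next
      case (Suc k)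
      have "y (n0 + 1 + int (Suc k)) = g (n0 + 1 + int k) (y (n0 + 1 + int k))"
        using ysol[rule_format, of "n0 + 1 + int k"] by (simp add: add.assoc)
      also have "\<dots> = x (n0 + 1 + int (Suc k))"
        using xsol[of "n0 + 1 + int k"] Suc by (simp add: add.assoc)
      finally show ?case .
    qed
    show "y = x"
    proof
      fix n
      show "y n = x n"
      proof (cases "n \<le> n0 + 1")
        case True then show ?thesis by (rule ybk)
      next
        case False
        hence "n = n0 + 1 + int (nat (n - n0 - 1))" by simp
        then show ?thesis using fwd by metis
      qed
    qed
  qed
  show ?thesis using xsol xE uniq by blast
qed



lemma mvt_est:
  fixes f :: "(real^'l) \<times> (real^'m) \<Rightarrow> real^'l"
    and f' :: "(real^'l) \<times> (real^'m) \<Rightarrow> ((real^'l) \<times> (real^'m)) \<Rightarrow>\<^sub>L (real^'l)"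
  assumes hasd: "\<And>z. (f has_derivative blinfun_apply (f' z)) (at z)"
    and close: "\<And>u. dist u Xm < \<delta> \<Longrightarrow> norm (f' (u, lam) - f' (Xm, lm)) \<le> \<eta>"
    and x: "dist x Xm < \<delta>" and y: "dist y Xm < \<delta>"
  shows "norm (f (x, lam) - f (y, lam) - blinfun_apply (f' (Xm, lm)) (x - y, 0)) \<le> \<eta> * norm (x - y)"
proof -
  define S where "S = ball Xm \<delta>"
  define D0 where "D0 = f' (Xm, lm)"
  define G where "G = (\<lambda>u. f (u, lam) - blinfun_apply D0 (u, 0))"
  define G' where "G' = (\<lambda>u h. blinfun_apply (f' (u, lam)) (h, 0) - blinfun_apply D0 (h, 0))"
  have pair: "((\<lambda>u::real^'l. (u, lam)) has_derivative (\<lambda>h. (h, 0))) (at u)" for u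
    by (intro has_derivative_Pair has_derivative_ident has_derivative_const)
  have der: "(G has_derivative G' u) (at u within S)" if "u \<in> S" for u
  proof -
    have 1: "((\<lambda>u. f (u, lam)) has_derivative (\<lambda>h. blinfun_apply (f' (u, lam)) (h, 0))) (at u)"
      using has_derivative_compose[OF pair hasd[of "(u, lam)"]] by simp
    have 2: "((\<lambda>u::real^'l. blinfun_apply D0 (u, 0)) has_derivative (\<lambda>h. blinfun_apply D0 (h, 0))) (at u)"
    proof -
      have p0: "((\<lambda>u::real^'l. (u, 0::real^'m)) has_derivative (\<lambda>h. (h, 0))) (at u)"
        by (intro has_derivative_Pair has_derivative_ident has_derivative_const)
      show ?thesis
        using has_derivative_compose[OF p0 bounded_linear_imp_has_derivative[OF blinfun.bounded_linear_right[of D0]]]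
        by simp
    qed
    show ?thesis unfolding G_def G'_def
      by (rule has_derivative_at_withinI, rule has_derivative_diff[OF 1 2])
  qed
  have bnd: "onorm (G' u) \<le> \<eta>" if "u \<in> S" for u
  proof (rule onorm_le)
    fix h :: "real^'l"
    have "G' u h = blinfun_apply (f' (u, lam) - D0) (h, 0)"
      unfolding G'_def by (simp add: blinfun.diff_left)
    hence "norm (G' u h) \<le> norm (f' (u, lam) - D0) * norm (h, 0::real^'m)"
      using norm_blinfun[of "f' (u, lam) - D0" "(h, 0::real^'m)"] by simp
    also have "\<dots> \<le> \<eta> * norm h"
    proof -
      have "norm (h, 0::real^'m) = norm h" by simp
      moreover have "norm (f' (u, lam) - D0) \<le> \<eta>"
        using close[of u] that unfolding S_def D0_def by (auto simp: dist_commute)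
      ultimately show ?thesis by (simp add: mult_right_mono)
    qed
    finally show "norm (G' u h) \<le> \<eta> * norm h" .
  qed
  have "norm (G x - G y) \<le> \<eta> * norm (x - y)"
    by (rule differentiable_bound[of S G G' \<eta> x y])
       (use der bnd x y in \<open>auto simp: S_def dist_commute\<close>)
  moreover have "G x - G y = f (x, lam) - f (y, lam) - blinfun_apply D0 (x - y, 0)"
  proof -
    have "blinfun_apply D0 (x - y, 0) = blinfun_apply D0 ((x, 0) - (y, 0))" by simp
    also have "\<dots> = blinfun_apply D0 (x, 0) - blinfun_apply D0 (y, 0)" by (rule blinfun.diff_right)
    finally show ?thesis unfolding G_def by simp
  qed
  ultimately show ?thesis unfolding D0_def by simp
qed


theorem mainTheorem8:
  fixes f :: "(real^'l) \<times> (real^'m) \<Rightarrow> real^'l"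
    and Lam :: "real \<Rightarrow> real^'m" and lm lp :: "real^'m"
    and X :: "real \<Rightarrow> real^'l" and Xm Xp :: "real^'l"
  assumes "C1_map f"
    and "parameter_shift Lam lm lp"
    and "stable_path f Lam lm lp X Xm Xp"
  shows "\<exists>\<epsilon>0>0. \<forall>\<epsilon>. 0 < \<epsilon> \<and> \<epsilon> < \<epsilon>0 \<longrightarrow>
           (\<exists>S>0. \<forall>(r::real) (N::nat). r > 0 \<and> N > 0 \<and> r * real N > S \<longrightarrow>
              (\<exists>!x. is_solution f Lam r x \<and> (\<forall>n::int. n \<le> - int N \<longrightarrow> dist (x n) Xm < \<epsilon>)))"
proof -
  obtain f' :: "(real^'l) \<times> (real^'m) \<Rightarrow> ((real^'l) \<times> (real^'m)) \<Rightarrow>\<^sub>L (real^'l)"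
    where hasd: "\<And>z. (f has_derivative blinfun_apply (f' z)) (at z)" and contf': "continuous_on UNIV f'"
    using assms(1) unfolding C1_map_def by blast
  have Lamlim: "(Lam \<longlongrightarrow> lm) at_bot" using assms(2) unfolding parameter_shift_def by blast
  have fX: "f (Xm, lm) = Xm" and sr: "Defs.spectral_radius (Dx f Xm lm) < 1"
    using assms(3) unfolding stable_path_def by blast+
  define A where "A = Dx f Xm lm"
  define D0 where "D0 = f' (Xm, lm)"
  have theD: "(THE D. (f has_derivative D) (at (Xm, lm))) = blinfun_apply D0"
    unfolding D0_def using hasd has_derivative_unique by blast
  have blD: "bounded_linear (\<lambda>h::real^'l. blinfun_apply D0 (h, 0))"
    by (intro bounded_linear_compose[OF blinfun.bounded_linear_right]
        bounded_linear_Pair bounded_linear_ident bounded_linear_zero)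
  have Aeq: "A *v h = blinfun_apply D0 (h, 0)" for h
  proof -
    have "A = matrix (\<lambda>h. blinfun_apply D0 (h, 0))" unfolding A_def Dx_def theD ..
    moreover have "Vector_Spaces.linear (*s) (*s) (\<lambda>h::real^'l. blinfun_apply D0 (h, 0))"
      unfolding linear_matrix_vector_mul_eq using bounded_linear.linear[OF blD] .
    ultimately show ?thesis using matrix_works by metis
  qed
  obtain K \<rho> where \<rho>: "0 < \<rho>" "\<rho> < 1" and Kb: "\<And>k x. norm (((*v) A ^^ k) x) \<le> K * \<rho>^k * norm x"
    using power_bound[of A] sr unfolding A_def by blast
  obtain Nf C \<theta> where \<theta>: "0 \<le> \<theta>" "\<theta> < 1" and Cpos: "0 < C"
    and Nadd: "\<And>u v. Nf (u + v) \<le> Nf u + Nf v" and Nneg: "\<And>v. Nf (- v) = Nf v"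
    and Nlow: "\<And>v. norm v \<le> Nf v" and Nup: "\<And>v. Nf v \<le> C * norm v"
    and NA: "\<And>v. Nf (A *v v) \<le> \<theta> * Nf v"
    using adapted_norm[OF \<rho> Kb] by blast
  define q where "q = (1 + \<theta>) / 2"
  have q: "0 \<le> q" "q < 1" "\<theta> < q" using \<theta> unfolding q_def by auto
  define \<eta> where "\<eta> = (q - \<theta>) / C"
  have \<eta>: "0 < \<eta>" "C * \<eta> = q - \<theta>" using q Cpos unfolding \<eta>_def by auto
  obtain \<delta> where \<delta>: "0 < \<delta>" and \<delta>f': "\<And>z. dist z (Xm, lm) < \<delta> \<Longrightarrow> dist (f' z) D0 < \<eta>"
    using contf' \<eta>(1) unfolding continuous_on_iff D0_def by (metis UNIV_I)
  have close: "norm (f' (u, lam) - D0) \<le> \<eta>" if "dist lam lm < \<delta>/2" "dist u Xm < \<delta>/2" for u lam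
  proof -
    have "dist (u, lam) (Xm, lm) \<le> dist u Xm + dist lam lm"
      unfolding dist_Pair_Pair by (rule sqrt_sum_squares_le_sum) auto
    hence "dist (u, lam) (Xm, lm) < \<delta>" using that by linarith
    from \<delta>f'[OF this] show ?thesis by (simp add: dist_norm)
  qed
  have contr: "Nf (f (x, lam) - f (y, lam)) \<le> q * Nf (x - y)"
    if lam: "dist lam lm < \<delta>/2" and x: "dist x Xm < \<delta>/2" and y: "dist y Xm < \<delta>/2" for lam x y
  proof -
    define R where "R = f (x, lam) - f (y, lam) - blinfun_apply D0 (x - y, 0)"
    have Rb: "norm R \<le> \<eta> * norm (x - y)" unfolding R_def D0_def
      by (rule mvt_est[OF hasd _ x y]) (use close lam in \<open>auto simp: D0_def\<close>)
    have "f (x, lam) - f (y, lam) = A *v (x - y) + R" unfolding R_def Aeq by simp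
    hence "Nf (f (x, lam) - f (y, lam)) \<le> Nf (A *v (x - y)) + Nf R" using Nadd by simp
    also have "\<dots> \<le> \<theta> * Nf (x - y) + C * (\<eta> * norm (x - y))"
      using NA[of "x - y"] Nup[of R] Rb Cpos by (smt (verit) mult_left_mono)
    also have "\<dots> \<le> \<theta> * Nf (x - y) + (C * \<eta>) * Nf (x - y)"
    proof -
      have "C * (\<eta> * norm (x - y)) = (C * \<eta>) * norm (x - y)" by simp
      also have "\<dots> \<le> (C * \<eta>) * Nf (x - y)"
        using Nlow[of "x - y"] Cpos \<eta> q(3) by (intro mult_left_mono) auto
      finally show ?thesis by linarith
    qed
    also have "\<dots> = (\<theta> + C * \<eta>) * Nf (x - y)" by (simp add: algebra_simps)
    also have "\<dots> = q * Nf (x - y)" using \<eta> by simp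
    finally show ?thesis .
  qed
  have pairc: "((\<lambda>u::real^'l. (u, c)) has_derivative (\<lambda>h. (h, 0))) (at u)" for u c
    by (intro has_derivative_Pair has_derivative_ident has_derivative_const)
  have gcont: "isCont (\<lambda>x. f (x, c)) x" for c x
    using has_derivative_continuous[OF has_derivative_compose[OF pairc hasd]] by simp
  have pairc2: "((\<lambda>c::real^'m. (Xm, c)) has_derivative (\<lambda>h. (0, h))) (at c)" for c
    by (intro has_derivative_Pair has_derivative_ident has_derivative_const)
  have hcont: "isCont (\<lambda>c. f (Xm, c)) lm"
    using has_derivative_continuous[OF has_derivative_compose[OF pairc2 hasd]] by simp
  show ?thesis
  proof (rule exI[of _ "\<delta>/2"], intro conjI allI impI)
    show "0 < \<delta>/2" using \<delta> by simp
    fix \<epsilon> :: real assume \<epsilon>: "0 < \<epsilon> \<and> \<epsilon> < \<delta>/2"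
    define e2 where "e2 = (1 - q) * (\<epsilon>/2) / C"
    have e2: "0 < e2" "C * e2 = (1 - q) * (\<epsilon>/2)" using q \<epsilon> Cpos unfolding e2_def by auto
    obtain \<delta>2 where \<delta>2: "0 < \<delta>2" and \<delta>2h: "\<And>lam. dist lam lm < \<delta>2 \<Longrightarrow> dist (f (Xm, lam)) Xm < e2"
      using hcont e2(1) unfolding continuous_at_eps_delta fX by (metis fX)
    have "eventually (\<lambda>s. dist (Lam s) lm < min (\<delta>/2) \<delta>2) at_bot"
    proof -
      have "0 < min (\<delta>/2) \<delta>2" using \<delta> \<delta>2 by simp
      thus ?thesis using Lamlim unfolding tendsto_iff by blast
    qed
    then obtain T where T: "\<And>s. s \<le> T \<Longrightarrow> dist (Lam s) lm < min (\<delta>/2) \<delta>2"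
      unfolding eventually_at_bot_linorder by blast
    define S where "S = max 1 (- T)"
    show "\<exists>S>0. \<forall>(r::real) (N::nat). r > 0 \<and> N > 0 \<and> r * real N > S \<longrightarrow>
              (\<exists>!x. is_solution f Lam r x \<and> (\<forall>n::int. n \<le> - int N \<longrightarrow> dist (x n) Xm < \<epsilon>))"
    proof -
      have S0: "0 < S" unfolding S_def by simp
      have "\<forall>(r::real) (N::nat). r > 0 \<and> N > 0 \<and> r * real N > S \<longrightarrow>
              (\<exists>!x. is_solution f Lam r x \<and> (\<forall>n::int. n \<le> - int N \<longrightarrow> dist (x n) Xm < \<epsilon>))"
      proof (intro allI impI)
      fix r :: real and N :: nat assume rN: "0 < r \<and> 0 < N \<and> S < r * real N"
      define g where "g n x = f (x, Lam (r * of_int n))" for n x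
      define n0 where "n0 = - int N - 1"
      have lamc: "dist (Lam (r * of_int n)) lm < min (\<delta>/2) \<delta>2" if "n \<le> n0" for n
      proof -
        have "real_of_int n \<le> - real N - 1" using that unfolding n0_def by linarith
        hence "r * real_of_int n \<le> r * (- real N - 1)" using rN by (intro mult_left_mono) auto
        also have "\<dots> \<le> - (r * real N)" using rN by (simp add: algebra_simps)
        also have "\<dots> \<le> T" using rN unfolding S_def by linarith
        finally show ?thesis by (rule T)
      qed
      have ex: "\<exists>!x. (\<forall>n. x (n + 1) = g n (x n)) \<and> (\<forall>n \<le> n0 + 1. x n \<in> ball Xm \<epsilon>)"
      proof (rule pullback[where Nf = Nf and C = C and q = q and \<rho> = "\<epsilon>/2" and pp = Xm and R = \<epsilon>])
        show "Nf (u + v) \<le> Nf u + Nf v" for u v by (rule Nadd)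
        show "Nf (- v) = Nf v" for v by (rule Nneg)
        show "norm v \<le> Nf v" for v by (rule Nlow)
        show "Nf v \<le> C * norm v" for v by (rule Nup)
        show "0 \<le> q" "q < 1" using q by auto
        show "Nf (g n x - g n y) \<le> q * Nf (x - y)" if "n \<le> n0" "x \<in> ball Xm \<epsilon>" "y \<in> ball Xm \<epsilon>" for n x y
          unfolding g_def using lamc[OF that(1)] that \<epsilon>
          by (intro contr) (auto simp: dist_commute)
        show "0 < \<epsilon>/2" using \<epsilon> by simp
        show "cball Xm (\<epsilon>/2) \<subseteq> ball Xm \<epsilon>" using \<epsilon> by auto
        show "ball Xm \<epsilon> \<subseteq> cball Xm \<epsilon>" by auto
        show "C * norm (g n Xm - Xm) \<le> (1 - q) * (\<epsilon>/2)" if "n \<le> n0" for n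
        proof -
          have "norm (g n Xm - Xm) < e2" using \<delta>2h lamc[OF that] unfolding g_def by (simp add: dist_norm)
          hence "C * norm (g n Xm - Xm) \<le> C * e2" using Cpos by simp
          thus ?thesis using e2 by simp
        qed
        show "isCont (g n) x" for n x unfolding g_def using gcont by simp
      qed
      have eqv: "(is_solution f Lam r x \<and> (\<forall>n::int. n \<le> - int N \<longrightarrow> dist (x n) Xm < \<epsilon>)) \<longleftrightarrow>
                 ((\<forall>n. x (n + 1) = g n (x n)) \<and> (\<forall>n \<le> n0 + 1. x n \<in> ball Xm \<epsilon>))" for x
        unfolding is_solution_def g_def n0_def by (auto simp: dist_commute)
      show "\<exists>!x. is_solution f Lam r x \<and> (\<forall>n::int. n \<le> - int N \<longrightarrow> dist (x n) Xm < \<epsilon>)"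
        unfolding eqv by (rule ex)
    qed
    thus ?thesis using S0 by blast
    qed
  qed
qed

end
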